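(* Let $\mathcal N$ be a network (with a general collision profile) of character $D^*$. For every integer $T\ge\max(2D^*,1)$, $\mathcal R^{(\mathcal M_T,\mathcal E_T)}\subseteq\mathcal R^{\mathcal N}$ (and hence $\mathcal R^{\mathcal N}=\mathcal R^{(\mathcal M_T,\mathcal E_T)}$).
   Context: A network is a triple $\mathcal N=(\mathcal L,\mathcal I,D_{\mathcal L})$ where $\mathcal L$ is a finite nonempty set of links, each $\mathcal I(l)$ is a collection of nonempty subsets of $\mathcal L$, and $D_{\mathcal L}$ assigns an integer $D_{\mathcal L}(l,l')$ to every pair with $l'\in\phi$ for some $\phi\in\mathcal I(l)$. The character is $D^*=\max_{l}\max_{\phi\in\mathcal I(l)}\max_{l'\in\phi}|D_{\mathcal L}(l,l')|$ (0 if there are no collision sets). A schedule is a map $S:\mathcal L\times\mathbb Z\to\{0,1\}$; $S(l,t)$ has a collision if there is $\phi\in\mathcal I(l)$ with $S(l',t+D_{\mathcal L}(l,l'))=1$ for all $l'\in\phi$; $S$ is collision free if no $(l,t)$ with $S(l,t)=1$ has a collision. $R_S(l)=\lim_{T\to\infty}\frac1T\sum_{t=0}^{T-1}\iota\big(S(l,t)=1\text{ and collision free}\big)$ when it exists; $R_S=(R_S(l))_l$. A nonnegative vector $R\in[0,\infty)^{\mathcal L}$ is achievable if for every $\epsilon>0$ some schedule $S$ has a rate vector with $R_S(l)\ge R(l)-\epsilon$ for all $l$; $\mathcal R^{\mathcal N}$ is the set of achievable nonnegative vectors. $S[T,k]$ is the $|\mathcal L|\times T$ binary matrix with $S[T,k](l,j)=S(l,kT+j)$.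 The scheduling graph $(\mathcal M_T,\mathcal E_T)$ has vertex set $\mathcal M_T$ = all $|\mathcal L|\times T$ binary matrices $A$ with $A=S[T,0]$ for some collision-free schedule $S$, and edge set $\mathcal E_T$ = all pairs $(A,B)$ with $A=S[T,0]$, $B=S[T,1]$ for some collision-free $S$. A cycle is a sequence $(A_0,\dots,A_k)$, $k\ge1$, with $(A_i,A_{i+1})\in\mathcal E_T$, $A_k=A_0$, and $A_0,\dots,A_{k-1}$ pairwise distinct; its rate vector is $R_C=\frac{1}{kT}\sum_{i=0}^{k-1}A_i\mathbf 1$. $\mathcal R^{(\mathcal M_T,\mathcal E_T)}$ is the convex hull of the rate vectors of all cycles. *)

theory Defs
  imports "HOL-Analysis.Analysis"
begin

(* A network over a finite nonempty type 'l of links: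
   I :: 'l \<Rightarrow> 'l set set   collision sets of each link,
   D :: 'l \<Rightarrow> 'l \<Rightarrow> int      delays (only relevant when l' \<in> \<phi> \<in> I l).
   A schedule is S :: 'l \<Rightarrow> int \<Rightarrow> bool  (True = 1). *)

definition network :: "('l::finite \<Rightarrow> 'l set set) \<Rightarrow> bool" where
  "network I \<longleftrightarrow> (\<forall>l. \<forall>\<phi>\<in>I l. \<phi> \<noteq> {})"

definition character :: "('l::finite \<Rightarrow> 'l set set) \<Rightarrow> ('l \<Rightarrow> 'l \<Rightarrow> int) \<Rightarrow> int" where
  "character I D = Max ({\<bar>D l l'\<bar> | l \<phi> l'. \<phi> \<in> I l \<and> l' \<in> \<phi>} \<union> {0})"

definition has_collision ::
  "('l \<Rightarrow> 'l set set) \<Rightarrow> ('l \<Rightarrow> 'l \<Rightarrow> int) \<Rightarrow> ('l \<Rightarrow> int \<Rightarrow> bool) \<Rightarrow> 'l \<Rightarrow> int \<Rightarrow> bool" where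
  "has_collision I D S l t \<longleftrightarrow> (\<exists>\<phi>\<in>I l. \<forall>l'\<in>\<phi>. S l' (t + D l l'))"

definition collision_free ::
  "('l \<Rightarrow> 'l set set) \<Rightarrow> ('l \<Rightarrow> 'l \<Rightarrow> int) \<Rightarrow> ('l \<Rightarrow> int \<Rightarrow> bool) \<Rightarrow> bool" where
  "collision_free I D S \<longleftrightarrow> (\<forall>l t. S l t \<longrightarrow> \<not> has_collision I D S l t)"

definition has_rate ::
  "('l \<Rightarrow> 'l set set) \<Rightarrow> ('l \<Rightarrow> 'l \<Rightarrow> int) \<Rightarrow> ('l \<Rightarrow> int \<Rightarrow> bool) \<Rightarrow> 'l \<Rightarrow> real \<Rightarrow> bool" where
  "has_rate I D S l r \<longleftrightarrow>
     ((\<lambda>T::nat. (1 / real T) *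
        (\<Sum>t<T. of_bool (S l (int t) \<and> \<not> has_collision I D S l (int t))))
      \<longlonglongrightarrow> r)"

definition achievable_region ::
  "('l::finite \<Rightarrow> 'l set set) \<Rightarrow> ('l \<Rightarrow> 'l \<Rightarrow> int) \<Rightarrow> (real ^ 'l) set" where
  "achievable_region I D =
     {R. (\<forall>l. R $ l \<ge> 0) \<and>
         (\<forall>\<epsilon>>0. \<exists>S RS. (\<forall>l. has_rate I D S l (RS l)) \<and> (\<forall>l. RS l \<ge> R $ l - \<epsilon>))}"

(* S[T,k] as an |L| x T binary matrix: entries at columns j \<ge> T are fixed to False *)
definition block :: "('l \<Rightarrow> int \<Rightarrow> bool) \<Rightarrow> nat \<Rightarrow> int \<Rightarrow> ('l \<Rightarrow> nat \<Rightarrow> bool)" where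
  "block S T k = (\<lambda>l j. if j < T then S l (k * int T + int j) else False)"

definition sched_vertices ::
  "('l \<Rightarrow> 'l set set) \<Rightarrow> ('l \<Rightarrow> 'l \<Rightarrow> int) \<Rightarrow> nat \<Rightarrow> ('l \<Rightarrow> nat \<Rightarrow> bool) set" where
  "sched_vertices I D T = {A. \<exists>S. collision_free I D S \<and> A = block S T 0}"

definition sched_edges ::
  "('l \<Rightarrow> 'l set set) \<Rightarrow> ('l \<Rightarrow> 'l \<Rightarrow> int) \<Rightarrow> nat \<Rightarrow> (('l \<Rightarrow> nat \<Rightarrow> bool) \<times> ('l \<Rightarrow> nat \<Rightarrow> bool)) set" where
  "sched_edges I D T = {(A, B). \<exists>S. collision_free I D S \<and> A = block S T 0 \<and> B = block S T 1}"

(* a cycle (A_0,...,A_k) with A_k = A_0 is given by the list [A_0,...,A_{k-1}] *)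
definition is_cycle ::
  "(('m \<times> 'm) set) \<Rightarrow> 'm list \<Rightarrow> bool" where
  "is_cycle E cs \<longleftrightarrow> length cs \<ge> 1 \<and> distinct cs \<and>
     (\<forall>i < length cs. (cs ! i, cs ! ((i + 1) mod length cs)) \<in> E)"

definition cycle_rate :: "nat \<Rightarrow> ('l::finite \<Rightarrow> nat \<Rightarrow> bool) list \<Rightarrow> real ^ 'l" where
  "cycle_rate T cs = (\<chi> l. (1 / (real (length cs) * real T)) *
      (\<Sum>i<length cs. \<Sum>j<T. of_bool ((cs ! i) l j)))"

definition graph_region ::
  "('l::finite \<Rightarrow> 'l set set) \<Rightarrow> ('l \<Rightarrow> 'l \<Rightarrow> int) \<Rightarrow> nat \<Rightarrow> (real ^ 'l) set" where
  "graph_region I D T = convex hull {cycle_rate T cs | cs. is_cycle (sched_edges I D T) cs}"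

end

theory Submission
  imports Defs
begin



lemma char_bound:
  fixes I :: "'l::finite \<Rightarrow> 'l set set"
  assumes "\<phi> \<in> I l" "l' \<in> \<phi>"
  shows "\<bar>D l l'\<bar> \<le> character I D"
proof -
  have fin: "finite ({\<bar>D l l'\<bar> | l \<phi> l'. \<phi> \<in> I l \<and> l' \<in> \<phi>} \<union> {0})"
  proof -
    have "{\<bar>D l l'\<bar> | l \<phi> l'. \<phi> \<in> I l \<and> l' \<in> \<phi>} \<subseteq> (\<lambda>(a,b). \<bar>D a b\<bar>) ` UNIV" by auto
    then have "finite {\<bar>D l l'\<bar> | l \<phi> l'. \<phi> \<in> I l \<and> l' \<in> \<phi>}"
      by (rule finite_subset) (rule finite_imageI, simp)
    then show ?thesis by (rule finite_UnI) simp
  qed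
  have mem: "\<bar>D l l'\<bar> \<in> {\<bar>D l l'\<bar> | l \<phi> l'. \<phi> \<in> I l \<and> l' \<in> \<phi>}"
    using assms by auto
  show ?thesis unfolding character_def
    by (rule Max_ge[OF fin UnI1[OF mem]])
qed

definition Zm :: "'l \<Rightarrow> nat \<Rightarrow> bool" where "Zm = (\<lambda>l j. False)"

lemma has_collision_mono:
  assumes "has_collision I D S l t" "\<And>l t. S l t \<Longrightarrow> S' l t"
  shows "has_collision I D S' l t"
  using assms unfolding has_collision_def by blast

lemma edge_to_Z:
  assumes "(A,B) \<in> sched_edges I D T"
  shows "(A, Zm) \<in> sched_edges I D T"
proof -
  obtain S where S: "collision_free I D S" "A = block S T 0" "B = block S T 1"
    using assms unfolding sched_edges_def by auto
  define S' where "S' = (\<lambda>l t. S l t \<and> t < int T)"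
  have cf: "collision_free I D S'"
    unfolding collision_free_def
  proof (intro allI impI notI)
    fix l t assume a: "S' l t" "has_collision I D S' l t"
    have "has_collision I D S l t"
      by (rule has_collision_mono[OF a(2)]) (simp add: S'_def)
    moreover have "S l t" using a(1) by (simp add: S'_def)
    ultimately show False using S(1) unfolding collision_free_def by blast
  qed
  have e1: "A = block S' T 0"
  proof (intro ext)
    fix l j show "A l j = block S' T 0 l j" unfolding S(2) block_def S'_def by simp
  qed
  have e2: "Zm = block S' T 1"
  proof (intro ext)
    fix l j show "Zm l j = block S' T 1 l j" unfolding Zm_def block_def S'_def by simp
  qed
  show ?thesis unfolding sched_edges_def using cf e1 e2 by blast
qed

lemma edge_from_Z:
  assumes "(A,B) \<in> sched_edges I D T"
  shows "(Zm, A) \<in> sched_edges I D T"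
proof -
  obtain S where S: "collision_free I D S" "A = block S T 0" "B = block S T 1"
    using assms unfolding sched_edges_def by auto
  define S' where "S' = (\<lambda>l t. S l (t - int T) \<and> t \<ge> int T)"
  have cf: "collision_free I D S'"
    unfolding collision_free_def
  proof (intro allI impI notI)
    fix l t assume a: "S' l t" "has_collision I D S' l t"
    obtain \<phi> where phi: "\<phi> \<in> I l" "\<forall>l'\<in>\<phi>. S' l' (t + D l l')"
      using a(2) unfolding has_collision_def by blast
    have "\<forall>l'\<in>\<phi>. S l' (t - int T + D l l')"
    proof
      fix l' assume "l' \<in> \<phi>"
      then have "S l' (t + D l l' - int T)" using phi(2) unfolding S'_def by blast
      moreover have "t + D l l' - int T = t - int T + D l l'" by simp
      ultimately show "S l' (t - int T + D l l')" by simp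
    qed
    then have "has_collision I D S l (t - int T)"
      unfolding has_collision_def using phi(1) by blast
    moreover have "S l (t - int T)" using a(1) unfolding S'_def by blast
    ultimately show False using S(1) unfolding collision_free_def by blast
  qed
  have e1: "Zm = block S' T 0"
  proof (intro ext)
    fix l j show "Zm l j = block S' T 0 l j" unfolding Zm_def block_def S'_def by simp
  qed
  have e2: "A = block S' T 1"
  proof (intro ext)
    fix l j show "A l j = block S' T 1 l j" unfolding S(2) block_def S'_def by simp
  qed
  show ?thesis unfolding sched_edges_def using cf e1 e2 by blast
qed




definition psched :: "('l \<Rightarrow> nat \<Rightarrow> bool) list \<Rightarrow> nat \<Rightarrow> 'l \<Rightarrow> int \<Rightarrow> bool" where
  "psched ws T l t = (ws ! nat ((t div int T) mod int (length ws))) l (nat (t mod int T))"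

definition cwalk :: "('m \<times> 'm) set \<Rightarrow> 'm list \<Rightarrow> bool" where
  "cwalk E ws \<longleftrightarrow> ws \<noteq> [] \<and> (\<forall>i < length ws. (ws ! i, ws ! ((i + 1) mod length ws)) \<in> E)"

lemma div_window:
  fixes s m :: int and T :: nat
  assumes "m * int T \<le> s" "s < m * int T + int T"
  shows "s div int T = m" "s mod int T = s - m * int T"
proof -
  define r where "r = s - m * int T"
  have T: "int T \<noteq> 0" using assms by linarith
  have r: "0 \<le> r" "r < int T" using assms unfolding r_def by linarith+
  have s: "s = r + m * int T" unfolding r_def by simp
  have "s div int T = m + r div int T" unfolding s using div_mult_self1[OF T, of r m] by simp
  also have "r div int T = 0" using r by simp
  finally show "s div int T = m" by simp
  have "s mod int T = r mod int T" unfolding s by (rule mod_mult_self1)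
  also have "\<dots> = r" using r by simp
  finally show "s mod int T = s - m * int T" unfolding r_def .
qed

lemma nat_mod_suc:
  assumes "k > 0"
  shows "nat ((m + 1) mod int k) = (nat (m mod int k) + 1) mod k"
proof -
  have "int (nat ((m + 1) mod int k)) = (m+1) mod int k" using assms by simp
  also have "\<dots> = (m mod int k + 1) mod int k" by (rule mod_add_left_eq[symmetric])
  also have "\<dots> = int ((nat (m mod int k) + 1) mod k)"
    using assms by (simp add: zmod_int add.commute)
  finally show ?thesis by linarith
qed

lemma window:
  assumes cw: "cwalk (sched_edges I D T) ws" and T: "T > 0"
  shows "\<exists>S'. collision_free I D S' \<and>
     (\<forall>l s. m * int T \<le> s \<and> s < m * int T + 2 * int T \<longrightarrow> psched ws T l s = S' l (s - m * int T))"
proof -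
  define k where "k = length ws"
  have k: "k > 0" using cw unfolding cwalk_def k_def by auto
  define i where "i = nat (m mod int k)"
  have ik: "i < k" using k unfolding i_def by (simp add: nat_less_iff)
  have "(ws ! i, ws ! ((i+1) mod k)) \<in> sched_edges I D T"
    using cw ik unfolding cwalk_def k_def by auto
  then obtain S' where S': "collision_free I D S'" "ws ! i = block S' T 0" "ws ! ((i+1) mod k) = block S' T 1"
    unfolding sched_edges_def by auto
  have eq: "psched ws T l s = S' l (s - m * int T)"
    if s: "m * int T \<le> s" "s < m * int T + 2 * int T" for l s
  proof (cases "s < m * int T + int T")
    case True
    note w = div_window[OF s(1) True]
    have r0: "0 \<le> s - m * int T" "s - m * int T < int T" using s True by linarith+
    then have n: "nat (s - m * int T) < T" by (simp add: nat_less_iff)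
    have "psched ws T l s = (ws ! i) l (nat (s - m * int T))"
      unfolding psched_def w i_def k_def by simp
    also have "\<dots> = S' l (0 * int T + int (nat (s - m * int T)))"
      unfolding S'(2) block_def using n by simp
    also have "0 * int T + int (nat (s - m * int T)) = s - m * int T" using r0 by simp
    finally show ?thesis .
  next
    case False
    have e: "(m+1) * int T = m * int T + int T" by (simp add: algebra_simps)
    have a: "(m+1) * int T \<le> s" "s < (m+1) * int T + int T" using False s e by linarith+
    note w = div_window[OF a]
    have r0: "0 \<le> s - (m+1) * int T" "s - (m+1) * int T < int T" using a by linarith+
    then have n: "nat (s - (m+1) * int T) < T" by (simp add: nat_less_iff)
    have ik2: "nat ((m + 1) mod int k) = (i + 1) mod k" unfolding i_def by (rule nat_mod_suc[OF k])
    have "psched ws T l s = (ws ! ((i+1) mod k)) l (nat (s - (m+1) * int T))"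
      unfolding psched_def w k_def[symmetric] ik2 by simp
    also have "\<dots> = S' l (1 * int T + int (nat (s - (m+1) * int T)))"
      unfolding S'(3) block_def using n by simp
    also have "1 * int T + int (nat (s - (m+1) * int T)) = s - m * int T" using r0 e by simp
    finally show ?thesis .
  qed
  show ?thesis by (rule exI[of _ S'], intro conjI allI impI S'(1) eq, auto)
qed

lemma psched_cf:
  fixes I :: "'l::finite \<Rightarrow> 'l set set"
  assumes cw: "cwalk (sched_edges I D T) ws" and T: "T > 0"
    and TD: "2 * character I D \<le> int T"
  shows "collision_free I D (psched ws T)"
  unfolding collision_free_def
proof (intro allI impI notI)
  fix l t
  assume St: "psched ws T l t" and hc: "has_collision I D (psched ws T) l t"
  define c where "c = character I D"
  obtain \<phi> where phi: "\<phi> \<in> I l" "\<forall>l'\<in>\<phi>. psched ws T l' (t + D l l')"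
    using hc unfolding has_collision_def by auto
  have bnd: "\<bar>D l l'\<bar> \<le> c" if "l' \<in> \<phi>" for l'
    using char_bound[of \<phi> I l l' D, OF phi(1) that] c_def by simp
  define q where "q = t div int T"
  define r where "r = t mod int T"
  have tqr: "t = q * int T + r" unfolding q_def r_def by simp
  have r: "0 \<le> r" "r < int T" using T unfolding r_def by auto
  obtain m where m: "m * int T \<le> t" "t < m * int T + 2 * int T"
    "\<And>l'. l' \<in> \<phi> \<Longrightarrow> m * int T \<le> t + D l l' \<and> t + D l l' < m * int T + 2 * int T"
  proof (cases "r \<ge> c")
    case True
    show ?thesis
    proof (rule that[of q])
      fix l' assume "l' \<in> \<phi>"
      from bnd[OF this] have "- c \<le> D l l'" "D l l' \<le> c" by auto
      with True r TD tqr c_def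
      show "q * int T \<le> t + D l l' \<and> t + D l l' < q * int T + 2 * int T" by linarith
    qed (use tqr r in linarith)+
  next
    case False
    have e: "(q - 1) * int T = q * int T - int T" by (simp add: algebra_simps)
    show ?thesis
    proof (rule that[of "q - 1"])
      fix l' assume "l' \<in> \<phi>"
      from bnd[OF this] have "- c \<le> D l l'" "D l l' \<le> c" by auto
      with False r TD tqr c_def e
      show "(q - 1) * int T \<le> t + D l l' \<and> t + D l l' < (q - 1) * int T + 2 * int T" by linarith
    qed (use tqr r e in linarith)+
  qed
  obtain S' where S': "collision_free I D S'"
    "\<And>l s. m * int T \<le> s \<Longrightarrow> s < m * int T + 2 * int T \<Longrightarrow> psched ws T l s = S' l (s - m * int T)"
    using window[OF cw T, of m] by blast
  have "S' l (t - m * int T)" using S'(2)[OF m(1,2)] St by simp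
  moreover have "has_collision I D S' l (t - m * int T)"
    unfolding has_collision_def
  proof (intro bexI[OF _ phi(1)] ballI)
    fix l' assume l': "l' \<in> \<phi>"
    have "psched ws T l' (t + D l l') = S' l' (t + D l l' - m * int T)"
      using S'(2) m(3)[OF l'] by blast
    with phi(2) l' show "S' l' (t - m * int T + D l l')" by (simp add: algebra_simps)
  qed
  ultimately show False using S'(1) unfolding collision_free_def by blast
qed




lemma periodic_shift:
  fixes f :: "nat \<Rightarrow> real"
  assumes per: "\<And>t. f (t + P) = f t"
  shows "f (t + q * P) = f t"
proof (induction q)
  case 0 then show ?case by simp
next
  case (Suc q)
  have "f (t + Suc q * P) = f ((t + q * P) + P)" by (simp add: algebra_simps)
  also have "\<dots> = f (t + q * P)" by (rule per)
  finally show ?case using Suc by simp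
qed

lemma periodic_sum:
  fixes f :: "nat \<Rightarrow> real"
  assumes per: "\<And>t. f (t + P) = f t"
  shows "(\<Sum>t<q * P + r. f t) = real q * (\<Sum>t<P. f t) + (\<Sum>t<r. f t)"
proof -
  have blk: "(\<Sum>t<q * P. f t) = real q * (\<Sum>t<P. f t)" for q
  proof (induction q)
    case 0 then show ?case by simp
  next
    case (Suc q)
    have "(\<Sum>t<Suc q * P. f t) = (\<Sum>t\<in>{0..<q * P}. f t) + (\<Sum>t\<in>{q*P..<q*P + P}. f t)"
      by (simp add: sum.atLeastLessThan_concat lessThan_atLeast0 add.commute)
    also have "(\<Sum>t\<in>{q*P..<q*P + P}. f t) = (\<Sum>t\<in>{0..<P}. f (t + q * P))"
      using sum.shift_bounds_nat_ivl[of f 0 "q*P" P] by (simp add: add.commute)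
    also have "\<dots> = (\<Sum>t\<in>{0..<P}. f t)" using periodic_shift[of f P, OF per] by simp
    finally show ?case using Suc by (simp add: lessThan_atLeast0 algebra_simps)
  qed
  have "(\<Sum>t<q * P + r. f t) = (\<Sum>t\<in>{0..<q * P}. f t) + (\<Sum>t\<in>{q*P..<q*P + r}. f t)"
    by (simp add: sum.atLeastLessThan_concat lessThan_atLeast0)
  also have "(\<Sum>t\<in>{q*P..<q*P + r}. f t) = (\<Sum>t\<in>{0..<r}. f (t + q * P))"
    using sum.shift_bounds_nat_ivl[of f 0 "q*P" r] by (simp add: add.commute)
  also have "\<dots> = (\<Sum>t\<in>{0..<r}. f t)" using periodic_shift[of f P, OF per] by simp
  finally show ?thesis using blk[of q] by (simp add: lessThan_atLeast0)
qed

lemma periodic_avg: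
  fixes f :: "nat \<Rightarrow> real"
  assumes P: "P > 0" and per: "\<And>t. f (t + P) = f t" and b: "\<And>t. 0 \<le> f t \<and> f t \<le> 1"
  shows "(\<lambda>N. (1 / real N) * (\<Sum>t<N. f t)) \<longlonglongrightarrow> (\<Sum>t<P. f t) / real P"
proof -
  define c where "c = (\<Sum>t<P. f t)"
  have c: "0 \<le> c" "c \<le> real P" unfolding c_def
    using sum_nonneg[of "{..<P}" f] sum_bounded_above[of "{..<P}" f 1] b by auto
  have bound: "norm ((1 / real N) * (\<Sum>t<N. f t) - c / real P) \<le> real P / real N" if N: "N > 0" for N
  proof -
    define q where "q = N div P"
    define r where "r = N mod P"
    have Nqr: "N = q * P + r" unfolding q_def r_def by simp
    have rP: "r < P" unfolding r_def using P by simp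
    define s where "s = (\<Sum>t<r. f t)"
    have s: "0 \<le> s" "s \<le> real r" unfolding s_def
      using sum_nonneg[of "{..<r}" f] sum_bounded_above[of "{..<r}" f 1] b by auto
    have sumN: "(\<Sum>t<N. f t) = real q * c + s"
      unfolding Nqr c_def s_def by (rule periodic_sum[of f P, OF per])
    have RN: "real N = real q * real P + real r" using Nqr by simp
    have NP: "real N > 0" "real P > 0" using N P by auto
    have eq: "(1 / real N) * (real q * c + s) - c / real P = (s * real P - c * real r) / (real N * real P)"
      using NP RN by (simp add: field_simps)
    have r1: "s * real P \<le> real P * real P" using s rP NP by (simp add: mult_right_mono)
    have r2: "c * real r \<le> real P * real P" using c rP
      by (metis less_imp_le mult_mono of_nat_0_le_iff of_nat_less_iff)
    have r3: "0 \<le> s * real P" "0 \<le> c * real r" using s c by auto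
    have "\<bar>s * real P - c * real r\<bar> \<le> real P * real P" using r1 r2 r3 by linarith
    then have "\<bar>s * real P - c * real r\<bar> / (real N * real P) \<le> real P * real P / (real N * real P)"
      using NP by (intro divide_right_mono) auto
    also have "\<dots> = real P / real N" using NP by (simp add: field_simps)
    finally show ?thesis unfolding sumN eq using NP by (simp add: abs_divide abs_mult)
  qed
  have "(\<lambda>N. (1 / real N) * (\<Sum>t<N. f t) - c / real P) \<longlonglongrightarrow> 0"
  proof (rule Lim_null_comparison)
    show "\<forall>\<^sub>F N in sequentially. norm ((1 / real N) * (\<Sum>t<N. f t) - c / real P) \<le> real P / real N"
      using bound eventually_sequentially[of "\<lambda>N. N > 0"] by (metis (mono_tags, lifting) eventually_mono eventually_gt_at_top)
    show "(\<lambda>N. real P / real N) \<longlonglongrightarrow> 0" by (rule lim_const_over_n)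
  qed
  then show ?thesis unfolding c_def by (simp add: LIM_zero_iff)
qed




lemma psched_val:
  assumes "m < length ws" "j < T"
  shows "psched ws T l (int (j + m * T)) = (ws ! m) l j"
proof -
  have a: "int m * int T \<le> int (j + m * T)" "int (j + m * T) < int m * int T + int T" using assms by auto
  note w = div_window[OF a]
  have e: "int (j + m * T) - int m * int T = int j" by simp
  have "nat (int m mod int (length ws)) = m" using assms(1)
    by (metis nat_int of_nat_mod mod_less)
  then show ?thesis unfolding psched_def w e by simp
qed

lemma psched_per:
  assumes "ws \<noteq> []" "T > 0"
  shows "psched ws T l (int (t + length ws * T)) = psched ws T l (int t)"
proof -
  define k where "k = length ws"
  have e: "int (t + k * T) = int t + int k * int T" by simp
  have T: "int T \<noteq> 0" using assms by simp
  have d: "(int t + int k * int T) div int T = int k + int t div int T"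
    by (rule div_mult_self1[OF T])
  have m: "(int t + int k * int T) mod int T = int t mod int T" by (rule mod_mult_self1)
  have mk: "(int k + int t div int T) mod int k = (int t div int T) mod int k" by simp
  show ?thesis unfolding psched_def k_def[symmetric] e d m mk ..
qed

lemma psched_rate:
  fixes I :: "'l::finite \<Rightarrow> 'l set set"
  assumes cw: "cwalk (sched_edges I D T) ws" and T: "T > 0"
    and TD: "2 * character I D \<le> int T"
  shows "has_rate I D (psched ws T) l (cycle_rate T ws $ l)"
proof -
  have cf: "collision_free I D (psched ws T)" by (rule psched_cf[OF cw T TD])
  define k where "k = length ws"
  have k: "k > 0" using cw unfolding cwalk_def k_def by auto
  define f :: "nat \<Rightarrow> real" where "f t = of_bool (psched ws T l (int t))" for t
  have fe: "of_bool (psched ws T l (int t) \<and> \<not> has_collision I D (psched ws T) l (int t)) = f t" for t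
    using cf unfolding collision_free_def f_def by auto
  have P: "k * T > 0" using k T by simp
  have per: "f (t + k * T) = f t" for t
    unfolding f_def k_def using psched_per[of ws T l t] cw T unfolding cwalk_def by simp
  have lim: "(\<lambda>N. (1 / real N) * (\<Sum>t<N. f t)) \<longlonglongrightarrow> (\<Sum>t<k * T. f t) / real (k * T)"
    by (rule periodic_avg[of "k * T" f, OF P per]) (simp add: f_def)
  have "(\<Sum>t<k * T. f t) = (\<Sum>m<k. \<Sum>t\<in>{m * T..<m * T + T}. f t)"
    by (rule sum.nat_group[symmetric])
  also have "\<dots> = (\<Sum>m<k. \<Sum>j<T. of_bool ((ws ! m) l j))"
  proof (rule sum.cong[OF refl])
    fix m assume "m \<in> {..<k}"
    then have mk: "m < length ws" unfolding k_def by simp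
    have "(\<Sum>t\<in>{m * T..<m * T + T}. f t) = (\<Sum>j\<in>{0..<T}. f (j + m * T))"
      using sum.shift_bounds_nat_ivl[of f 0 "m*T" T] by (simp add: add.commute)
    also have "\<dots> = (\<Sum>j<T. of_bool ((ws ! m) l j))"
      unfolding lessThan_atLeast0
    proof (rule sum.cong[OF refl])
      fix j assume "j \<in> {0..<T}"
      then have jT: "j < T" by simp
      show "f (j + m * T) = of_bool ((ws ! m) l j)" unfolding f_def psched_val[OF mk jT] ..
    qed
    finally show "(\<Sum>t\<in>{m * T..<m * T + T}. f t) = (\<Sum>j<T. of_bool ((ws ! m) l j))" .
  qed
  finally have cs: "(\<Sum>t<k * T. f t) / real (k * T) = cycle_rate T ws $ l"
    unfolding cycle_rate_def k_def by simp
  show ?thesis unfolding has_rate_def fe using lim unfolding cs .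
qed




lemma cwalk_succ:
  "cwalk E ws \<longleftrightarrow> ws \<noteq> [] \<and> successively (\<lambda>a b. (a,b) \<in> E) ws \<and> (last ws, hd ws) \<in> E"
proof
  assume cw: "cwalk E ws"
  then have ne: "ws \<noteq> []" and ix: "\<And>i. i < length ws \<Longrightarrow> (ws ! i, ws ! ((i + 1) mod length ws)) \<in> E"
    unfolding cwalk_def by auto
  have "successively (\<lambda>a b. (a,b) \<in> E) ws"
    unfolding successively_conv_nth
  proof (intro allI impI)
    fix i assume i: "Suc i < length ws"
    then have "(i + 1) mod length ws = Suc i" by simp
    with ix[of i] i show "(ws ! i, ws ! Suc i) \<in> E" by simp
  qed
  moreover have "(last ws, hd ws) \<in> E"
  proof -
    have l: "length ws - 1 < length ws" using ne by simp
    have "(length ws - 1 + 1) mod length ws = 0" using ne by simp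
    with ix[OF l] show ?thesis using ne by (simp add: last_conv_nth hd_conv_nth)
  qed
  ultimately show "ws \<noteq> [] \<and> successively (\<lambda>a b. (a,b) \<in> E) ws \<and> (last ws, hd ws) \<in> E"
    using ne by blast
next
  assume a: "ws \<noteq> [] \<and> successively (\<lambda>a b. (a,b) \<in> E) ws \<and> (last ws, hd ws) \<in> E"
  then have ne: "ws \<noteq> []" and sc: "\<And>i. Suc i < length ws \<Longrightarrow> (ws ! i, ws ! Suc i) \<in> E"
    and lh: "(last ws, hd ws) \<in> E"
    unfolding successively_conv_nth by auto
  show "cwalk E ws" unfolding cwalk_def
  proof (intro conjI allI impI ne)
    fix i assume i: "i < length ws"
    show "(ws ! i, ws ! ((i + 1) mod length ws)) \<in> E"
    proof (cases "Suc i < length ws")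
      case True then show ?thesis using sc[OF True] by simp
    next
      case False
      then have "i = length ws - 1" using i by simp
      then show ?thesis using lh ne by (simp add: last_conv_nth hd_conv_nth)
    qed
  qed
qed

lemma concat_rep_props:
  assumes "w \<noteq> []" "p > 0"
  shows "concat (replicate p w) \<noteq> []" "hd (concat (replicate p w)) = hd w"
    "last (concat (replicate p w)) = last w"
proof -
  obtain p' where p: "p = Suc p'" using assms(2) by (cases p) auto
  show "concat (replicate p w) \<noteq> []" "hd (concat (replicate p w)) = hd w"
    using assms(1) unfolding p by auto
  have "concat (replicate (Suc p') w) = concat (replicate p' w) @ w"
    by (simp add: replicate_append_same[symmetric])
  then show "last (concat (replicate p w)) = last w" using assms(1) unfolding p by simp
qed

lemma concat_rep_succ:
  assumes "w \<noteq> []" "successively R w" "R (last w) (hd w)"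
  shows "successively R (concat (replicate p w))"
proof (induction p)
  case 0 then show ?case by simp
next
  case (Suc p)
  show ?case
  proof (cases "p = 0")
    case True then show ?thesis using assms by simp
  next
    case False
    then have "hd (concat (replicate p w)) = hd w" using concat_rep_props[OF assms(1)] by simp
    then show ?thesis using Suc assms by (simp add: successively_append_iff)
  qed
qed

lemma cwalk_vertex:
  assumes "cwalk E ws" "v \<in> set ws"
  shows "v \<in> fst ` E"
proof -
  obtain i where i: "i < length ws" "v = ws ! i" using assms(2) by (metis in_set_conv_nth)
  have "(ws ! i, ws ! ((i + 1) mod length ws)) \<in> E" using assms(1) i(1) unfolding cwalk_def by blast
  then show ?thesis using i(2) by force
qed

lemma Zm_edges:
  assumes "v \<in> fst ` sched_edges I D T"
  shows "(v, Zm) \<in> sched_edges I D T" "(Zm, v) \<in> sched_edges I D T"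
  using assms edge_to_Z edge_from_Z by force+

lemma comb_walk:
  assumes c1: "cwalk (sched_edges I D T) w1" and c2: "cwalk (sched_edges I D T) w2"
    and p: "p > 0" and q: "q > 0"
  shows "cwalk (sched_edges I D T) (concat (replicate p w1) @ Zm # concat (replicate q w2) @ [Zm])"
proof -
  define E where "E = sched_edges I D T"
  define R where "R = (\<lambda>a b. (a,b) \<in> E)"
  have w1: "w1 \<noteq> []" "successively R w1" "R (last w1) (hd w1)"
    using c1 unfolding cwalk_succ R_def E_def by auto
  have w2: "w2 \<noteq> []" "successively R w2" "R (last w2) (hd w2)"
    using c2 unfolding cwalk_succ R_def E_def by auto
  have v1: "hd w1 \<in> fst ` E" "last w1 \<in> fst ` E"
    using cwalk_vertex[OF c1] w1(1) unfolding E_def by auto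
  have v2: "hd w2 \<in> fst ` E" "last w2 \<in> fst ` E"
    using cwalk_vertex[OF c2] w2(1) unfolding E_def by auto
  note z = Zm_edges[of _ I D T, folded E_def]
  define X1 where "X1 = concat (replicate p w1)"
  define X2 where "X2 = concat (replicate q w2)"
  have X1: "X1 \<noteq> []" "hd X1 = hd w1" "last X1 = last w1" "successively R X1"
    unfolding X1_def using concat_rep_props[OF w1(1) p] concat_rep_succ[of w1 R p, OF w1(1) w1(2) w1(3)] by auto
  have X2: "X2 \<noteq> []" "hd X2 = hd w2" "last X2 = last w2" "successively R X2"
    unfolding X2_def using concat_rep_props[OF w2(1) q] concat_rep_succ[of w2 R q, OF w2(1) w2(2) w2(3)] by auto
  have s: "successively R (X1 @ Zm # X2 @ [Zm])"
    using X1 X2 z[OF v1(2)] z[OF v2(1)] z[OF v2(2)]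
    by (simp add: successively_append_iff successively_Cons R_def)
  have "(last (X1 @ Zm # X2 @ [Zm]), hd (X1 @ Zm # X2 @ [Zm])) \<in> E"
    using X1 z[OF v1(1)] by simp
  then show ?thesis unfolding cwalk_succ X1_def[symmetric] X2_def[symmetric] E_def[symmetric]
    using s unfolding R_def by simp
qed

definition bsum :: "nat \<Rightarrow> 'l \<Rightarrow> ('l \<Rightarrow> nat \<Rightarrow> bool) \<Rightarrow> real" where
  "bsum T l A = (\<Sum>j<T. of_bool (A l j))"

lemma cycle_rate_sl:
  "cycle_rate T ws $ l = sum_list (map (bsum T l) ws) / (real (length ws) * real T)"
proof -
  have "(\<Sum>i<length ws. \<Sum>j<T. of_bool ((ws ! i) l j)) = sum_list (map (bsum T l) ws)"
    unfolding sum_list_sum_nth bsum_def by (simp add: lessThan_atLeast0)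
  then show ?thesis unfolding cycle_rate_def by simp
qed

lemma sl_comb:
  "sum_list (map (bsum T l) (concat (replicate p w1) @ Zm # concat (replicate q w2) @ [Zm]))
   = real p * sum_list (map (bsum T l) w1) + real q * sum_list (map (bsum T l) w2)"
proof -
  have r: "sum_list (map (bsum T l) (concat (replicate n w))) = real n * sum_list (map (bsum T l) w)" for n w
    by (induction n) (auto simp: algebra_simps)
  have z: "bsum T l Zm = 0" unfolding bsum_def Zm_def by simp
  show ?thesis using r z by simp
qed




lemma floor_lim:
  assumes "0 \<le> u"
  shows "(\<lambda>n. real (nat \<lfloor>real n * u\<rfloor> + 1) / real n) \<longlonglongrightarrow> u"
proof -
  have b: "norm (real (nat \<lfloor>real n * u\<rfloor> + 1) / real n - u) \<le> 1 / real n" if n: "n > 0" for n :: nat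
  proof -
    have nu: "0 \<le> real n * u" using assms by simp
    have e: "real (nat \<lfloor>real n * u\<rfloor> + 1) = of_int \<lfloor>real n * u\<rfloor> + 1" using nu by simp
    have f1: "of_int \<lfloor>real n * u\<rfloor> \<le> real n * u" by (rule of_int_floor_le)
    have f2: "real n * u < of_int \<lfloor>real n * u\<rfloor> + 1" by (rule real_of_int_floor_add_one_gt)
    have np: "real n > 0" using n by simp
    have "real (nat \<lfloor>real n * u\<rfloor> + 1) / real n - u = (of_int \<lfloor>real n * u\<rfloor> + 1 - real n * u) / real n"
      unfolding e using np by (simp add: field_simps)
    moreover have "0 \<le> (of_int \<lfloor>real n * u\<rfloor> + 1 - real n * u) / real n" using f2 np by simp
    moreover have "(of_int \<lfloor>real n * u\<rfloor> + 1 - real n * u) / real n \<le> 1 / real n"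
      using f1 np by (intro divide_right_mono) auto
    ultimately show ?thesis by simp
  qed
  have "(\<lambda>n. real (nat \<lfloor>real n * u\<rfloor> + 1) / real n - u) \<longlonglongrightarrow> 0"
  proof (rule Lim_null_comparison)
    show "\<forall>\<^sub>F n in sequentially. norm (real (nat \<lfloor>real n * u\<rfloor> + 1) / real n - u) \<le> 1 / real n"
      by (rule eventually_mono[OF eventually_gt_at_top[of 0]]) (rule b)
    show "(\<lambda>n. 1 / real n) \<longlonglongrightarrow> 0" by (rule lim_const_over_n)
  qed
  then show ?thesis by (simp add: LIM_zero_iff)
qed

definition Wset :: "('l::finite \<Rightarrow> 'l set set) \<Rightarrow> ('l \<Rightarrow> 'l \<Rightarrow> int) \<Rightarrow> nat \<Rightarrow> (real ^ 'l) set" where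
  "Wset I D T = cycle_rate T ` {ws. cwalk (sched_edges I D T) ws}"

lemma alg_id:
  fixes A B T Dn K M S1 S2 :: real
  assumes "A > 0" "B > 0" "T > 0" "Dn > 0"
  shows "(B * K * S1 + A * M * S2) / (Dn * T) = A * B / Dn * (K * (S1 / (A * T)) + M * (S2 / (B * T)))"
  using assms by (simp add: field_simps)

lemma comb_formula:
  fixes x y :: "real ^ 'l::finite"
  assumes c1: "cwalk (sched_edges I D T) w1" and c2: "cwalk (sched_edges I D T) w2"
    and x: "x = cycle_rate T w1" and y: "y = cycle_rate T w2" and T: "T > 0"
  shows "cycle_rate T (concat (replicate (length w2 * (K + 1)) w1) @ Zm # concat (replicate (length w1 * (M + 1)) w2) @ [Zm])
    = (real (length w1) * real (length w2) /
        (real (length w1) * real (length w2) * (real (K + 1) + real (M + 1)) + 2)) *\<^sub>R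
       (real (K + 1) *\<^sub>R x + real (M + 1) *\<^sub>R y)"
  unfolding vec_eq_iff
proof (intro allI)
  fix l
  define a where "a = length w1"
  define b where "b = length w2"
  have a: "real a > 0" using c1 unfolding cwalk_def a_def by auto
  have b: "real b > 0" using c2 unfolding cwalk_def b_def by auto
  have Tp: "real T > 0" using T by simp
  define S1 where "S1 = sum_list (map (bsum T l) w1)"
  define S2 where "S2 = sum_list (map (bsum T l) w2)"
  have xl: "x $ l = S1 / (real a * real T)" unfolding x cycle_rate_sl S1_def a_def ..
  have yl: "y $ l = S2 / (real b * real T)" unfolding y cycle_rate_sl S2_def b_def ..
  have len: "real (length (concat (replicate (b * (K + 1)) w1) @ Zm # concat (replicate (a * (M + 1)) w2) @ [Zm]))
     = real a * real b * (real (K + 1) + real (M + 1)) + 2"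
    by (simp add: length_concat sum_list_replicate a_def b_def algebra_simps)
  have "cycle_rate T (concat (replicate (b * (K + 1)) w1) @ Zm # concat (replicate (a * (M + 1)) w2) @ [Zm]) $ l
     = (real (b * (K + 1)) * S1 + real (a * (M + 1)) * S2) / ((real a * real b * (real (K + 1) + real (M + 1)) + 2) * real T)"
    unfolding cycle_rate_sl sl_comb len S1_def S2_def ..
  also have "\<dots> = (real a * real b / (real a * real b * (real (K + 1) + real (M + 1)) + 2)) *
       (real (K + 1) * x $ l + real (M + 1) * y $ l)"
    unfolding xl yl of_nat_mult
    by (rule alg_id[OF a b Tp]) (intro add_pos_pos mult_pos_pos a b, simp_all)
  finally show "cycle_rate T (concat (replicate (length w2 * (K + 1)) w1) @ Zm # concat (replicate (length w1 * (M + 1)) w2) @ [Zm]) $ l =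
    ((real (length w1) * real (length w2) /
        (real (length w1) * real (length w2) * (real (K + 1) + real (M + 1)) + 2)) *\<^sub>R
       (real (K + 1) *\<^sub>R x + real (M + 1) *\<^sub>R y)) $ l"
    unfolding a_def b_def by simp
qed




lemma comb_closure:
  fixes x y :: "real ^ 'l::finite"
  assumes xW: "x \<in> Wset I D T" and yW: "y \<in> Wset I D T" and u: "0 \<le> u" "u \<le> 1" and T: "T > 0"
  shows "u *\<^sub>R x + (1 - u) *\<^sub>R y \<in> closure (Wset I D T)"
proof -
  obtain w1 where c1: "cwalk (sched_edges I D T) w1" and x: "x = cycle_rate T w1"
    using xW unfolding Wset_def by auto
  obtain w2 where c2: "cwalk (sched_edges I D T) w2" and y: "y = cycle_rate T w2"
    using yW unfolding Wset_def by auto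
  define a where "a = length w1"
  define b where "b = length w2"
  have a: "a > 0" using c1 unfolding cwalk_def a_def by auto
  have b: "b > 0" using c2 unfolding cwalk_def b_def by auto
  define k where "k n = nat \<lfloor>real n * u\<rfloor>" for n :: nat
  define m where "m n = nat \<lfloor>real n * (1 - u)\<rfloor>" for n :: nat
  define L where "L n = concat (replicate (b * (k n + 1)) w1) @ Zm # concat (replicate (a * (m n + 1)) w2) @ [Zm]" for n
  define f where "f n = cycle_rate T (L n)" for n
  have fW: "f n \<in> Wset I D T" for n
    unfolding f_def Wset_def L_def
    using comb_walk[OF c1 c2, of "b * (k n + 1)" "a * (m n + 1)"] a b by auto
  define AB where "AB = real a * real b"
  have AB: "AB > 0" unfolding AB_def using a b by simp
  have fe: "f n = (AB / (AB * (real (k n + 1) + real (m n + 1)) + 2)) *\<^sub>R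
       (real (k n + 1) *\<^sub>R x + real (m n + 1) *\<^sub>R y)" for n
    unfolding f_def L_def a_def b_def AB_def
    by (rule comb_formula[OF c1 c2 x y T])
  define \<alpha> where "\<alpha> n = real (k n + 1) / real n" for n :: nat
  define \<beta> where "\<beta> n = real (m n + 1) / real n" for n :: nat
  define g where "g n = (AB / (AB * (\<alpha> n + \<beta> n) + 2 / real n)) *\<^sub>R (\<alpha> n *\<^sub>R x + \<beta> n *\<^sub>R y)" for n
  have \<alpha>: "\<alpha> \<longlonglongrightarrow> u" unfolding \<alpha>_def k_def by (rule floor_lim[OF u(1)])
  have \<beta>: "\<beta> \<longlonglongrightarrow> 1 - u" unfolding \<beta>_def m_def by (rule floor_lim) (use u in simp)
  have z: "(\<lambda>n. 2 / real n) \<longlonglongrightarrow> (0::real)" by (rule lim_const_over_n)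
  have "g \<longlonglongrightarrow> (AB / (AB * (u + (1 - u)) + 0)) *\<^sub>R (u *\<^sub>R x + (1 - u) *\<^sub>R y)"
    unfolding g_def
    by (intro tendsto_intros \<alpha> \<beta> z) (use AB in simp)
  then have gl: "g \<longlonglongrightarrow> u *\<^sub>R x + (1 - u) *\<^sub>R y" using AB by simp
  have ev: "\<forall>\<^sub>F n in sequentially. g n = f n"
  proof (rule eventually_mono[OF eventually_gt_at_top[of 0]])
    fix n :: nat assume n: "n > 0"
    then have np: "real n > 0" by simp
    define K where "K = real (k n + 1)"
    define M where "M = real (m n + 1)"
    have K: "K > 0" "M > 0" unfolding K_def M_def by simp_all
    have v: "(K / real n) *\<^sub>R x + (M / real n) *\<^sub>R y = (1 / real n) *\<^sub>R (K *\<^sub>R x + M *\<^sub>R y)"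
      by (simp add: scaleR_add_right)
    have s: "AB / (AB * (K / real n + M / real n) + 2 / real n) * (1 / real n) = AB / (AB * (K + M) + 2)"
      using np AB K by (simp add: field_simps)
    have "g n = (AB / (AB * (K / real n + M / real n) + 2 / real n)) *\<^sub>R ((1 / real n) *\<^sub>R (K *\<^sub>R x + M *\<^sub>R y))"
      unfolding g_def \<alpha>_def \<beta>_def K_def[symmetric] M_def[symmetric] v ..
    also have "\<dots> = (AB / (AB * (K + M) + 2)) *\<^sub>R (K *\<^sub>R x + M *\<^sub>R y)"
      unfolding scaleR_scaleR s ..
    finally show "g n = f n" unfolding fe K_def M_def .
  qed
  have "f \<longlonglongrightarrow> u *\<^sub>R x + (1 - u) *\<^sub>R y" by (rule Lim_transform_eventually[OF gl ev])
  then show ?thesis unfolding closure_sequential using fW by blast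
qed

lemma convex_closure_W:
  assumes T: "T > 0"
  shows "convex (closure (Wset I D T))"
  unfolding convex_def
proof (intro ballI allI impI)
  fix x y and u v :: real
  assume x: "x \<in> closure (Wset I D T)" and y: "y \<in> closure (Wset I D T)" and uv: "0 \<le> u" "0 \<le> v" "u + v = 1"
  obtain xs where xs: "\<And>n. xs n \<in> Wset I D T" "xs \<longlonglongrightarrow> x" using x unfolding closure_sequential by blast
  obtain ys where ys: "\<And>n. ys n \<in> Wset I D T" "ys \<longlonglongrightarrow> y" using y unfolding closure_sequential by blast
  have v: "v = 1 - u" using uv by simp
  have "u *\<^sub>R x + v *\<^sub>R y \<in> closure (Wset I D T)"
  proof (rule closed_sequentially[OF closed_closure])
    show "u *\<^sub>R xs n + v *\<^sub>R ys n \<in> closure (Wset I D T)" for n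
      unfolding v by (rule comb_closure[OF xs(1) ys(1) uv(1) _ T]) (use uv in simp)
    show "(\<lambda>n. u *\<^sub>R xs n + v *\<^sub>R ys n) \<longlonglongrightarrow> u *\<^sub>R x + v *\<^sub>R y"
      by (intro tendsto_intros xs(2) ys(2))
  qed
  then show "u *\<^sub>R x + v *\<^sub>R y \<in> closure (Wset I D T)" .
qed

lemma closure_W_ach:
  fixes I :: "'l::finite \<Rightarrow> 'l set set"
  assumes x: "x \<in> closure (Wset I D T)" and nn: "\<forall>l. 0 \<le> x $ l"
    and T: "T > 0" and TD: "2 * character I D \<le> int T"
  shows "x \<in> achievable_region I D"
  unfolding achievable_region_def
proof (intro CollectI conjI)
  show "\<forall>l. 0 \<le> x $ l" by (rule nn)
  show "\<forall>\<epsilon>>0. \<exists>S RS. (\<forall>l. has_rate I D S l (RS l)) \<and> (\<forall>l. x $ l - \<epsilon> \<le> RS l)"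
  proof (intro allI impI)
  fix \<epsilon> :: real assume e: "\<epsilon> > 0"
  obtain y where y: "y \<in> Wset I D T" "dist y x < \<epsilon>" using x e unfolding closure_approachable by blast
  obtain ws where cw: "cwalk (sched_edges I D T) ws" and yw: "y = cycle_rate T ws"
    using y(1) unfolding Wset_def by auto
  have r: "\<forall>l. has_rate I D (psched ws T) l (y $ l)"
    unfolding yw using psched_rate[OF cw T TD] by blast
  have b: "\<forall>l. y $ l \<ge> x $ l - \<epsilon>"
  proof
    fix l
    have "\<bar>(y - x) $ l\<bar> \<le> norm (y - x)" by (rule component_le_norm_cart)
    also have "\<dots> < \<epsilon>" using y(2) by (simp add: dist_norm)
    finally show "y $ l \<ge> x $ l - \<epsilon>" by simp
  qed
  show "\<exists>S RS. (\<forall>l. has_rate I D S l (RS l)) \<and> (\<forall>l. x $ l - \<epsilon> \<le> RS l)"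
    using r b by blast
  qed
qed

theorem theorem7:
  fixes I :: "'l::finite \<Rightarrow> 'l set set" and D :: "'l \<Rightarrow> 'l \<Rightarrow> int" and T :: nat
  assumes "network I"
    and "int T \<ge> max (2 * character I D) 1"
  shows "graph_region I D T \<subseteq> achievable_region I D"
proof
  have T: "T > 0" using assms(2) by simp
  have TD: "2 * character I D \<le> int T" using assms(2) by simp
  define C where "C = {cycle_rate T cs | cs. is_cycle (sched_edges I D T) cs}"
  have CW: "C \<subseteq> Wset I D T"
    unfolding C_def Wset_def is_cycle_def cwalk_def by auto
  have h1: "convex hull C \<subseteq> closure (Wset I D T)"
    by (rule hull_minimal[of C "closure (Wset I D T)" convex, OF subset_trans[OF CW closure_subset] convex_closure_W[OF T, of I D]])
  define N where "N = {x :: real ^ 'l. \<forall>l. 0 \<le> x $ l}"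
  have cN: "convex N" unfolding convex_def N_def
    by (auto intro!: add_nonneg_nonneg mult_nonneg_nonneg)
  have CN: "C \<subseteq> N" unfolding C_def N_def cycle_rate_def
    by (auto intro!: mult_nonneg_nonneg sum_nonneg divide_nonneg_nonneg)
  have h2: "convex hull C \<subseteq> N" by (rule hull_minimal[of C N convex, OF CN cN])
  fix x assume "x \<in> graph_region I D T"
  then have x: "x \<in> convex hull C" unfolding graph_region_def C_def .
  show "x \<in> achievable_region I D"
    by (rule closure_W_ach[OF _ _ T TD]) (use x h1 h2 N_def in auto)
qed


end
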